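(* Let $\Lambda=\{\lambda_n,\mu_n\}_{n=1}^{\infty}$ belong to the class $ABC$, let $\eta=\sup_n|\arg\lambda_n|$, and let $-\infty<\gamma<\beta<\infty$. Suppose that the Taylor–Dirichlet series \[ f(z)=\sum_{n=1}^{\infty}\Big(\sum_{k=0}^{\mu_n-1}c_{n,k}z^k\Big)e^{\lambda_n z},\qquad c_{n,k}\in\mathbb{C}, \] defines an analytic function in the sector $\Theta_{\eta,\beta}$ (the series converging uniformly on compact subsets of $\Theta_{\eta,\beta}$), and that $f\in L^p(\gamma,\beta)$ for some $p\ge1$. Then $f$ belongs to the closed span of $E_\Lambda$ in $L^p(\gamma,\beta)$.
   Context: A multiplicity sequence $\Lambda=\{\lambda_n,\mu_n\}_{n=1}^\infty$ consists of distinct nonzero complex numbers $\lambda_n$ with $|\lambda_n|\to\infty$, $|\lambda_n|\le|\lambda_{n+1}|$, and positive integers $\mu_n$. $A^0_{|z|}$ is the space of entire functions $F$ with: for every $\epsilon>0$ there is $M_\epsilon$ with $|F(z)|\le M_\epsilon e^{\epsilon|z|}$ on $\mathbb{C}$. $\Lambda$ is an interpolating variety for $A^0_{|z|}$ if for every doubly indexed complex sequence $(a_{n,k})_{n\in\mathbb{N},0\le k\le\mu_n-1}$ with $\sup_n\sum_{k}|a_{n,k}|e^{-\epsilon|\lambda_n|}<\infty$ for every $\epsilon>0$ there is $f\in A^0_{|z|}$ with $f^{(k)}(\lambda_n)/k!=a_{n,k}$ for all $n,k$. $\Lambda\in ABC$ means: (A) $\sum_n\mu_n/|\lambda_n|<\infty$;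 (B) $\sup_n|\arg\lambda_n|<\pi/2$; (C) $\Lambda$ is an interpolating variety for $A^0_{|z|}$. $E_\Lambda=\{x^ke^{\lambda_n x}:n\in\mathbb{N},\ 0\le k\le\mu_n-1\}$. For $\eta\in(0,\pi/2)$, $\Theta_{\eta,\beta}=\{z:\Re z<\beta,\ |\Im z|\le|\Re(z-\beta)|/\tan\eta\}$; for $\eta=0$, $\Theta_{0,\beta}=\{\Re z<\beta\}$. *)

theory Defs
  imports "HOL-Complex_Analysis.Complex_Analysis"
begin

text \<open>Multiplicity sequences are indexed from 0 instead of 1.\<close>

definition multiplicity_seq :: "(nat \<Rightarrow> complex) \<Rightarrow> (nat \<Rightarrow> nat) \<Rightarrow> bool" where
  "multiplicity_seq lam mu \<longleftrightarrow>
     inj lam \<and> (\<forall>n. lam n \<noteq> 0) \<and>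
     filterlim (\<lambda>n. norm (lam n)) at_top sequentially \<and>
     (\<forall>n. norm (lam n) \<le> norm (lam (Suc n))) \<and>
     (\<forall>n. mu n \<ge> 1)"

definition A0 :: "(complex \<Rightarrow> complex) set" where
  "A0 = {F. F holomorphic_on UNIV \<and>
            (\<forall>\<epsilon>>0. \<exists>M. \<forall>z. norm (F z) \<le> M * exp (\<epsilon> * norm z))}"

definition interpolating_variety_A0 :: "(nat \<Rightarrow> complex) \<Rightarrow> (nat \<Rightarrow> nat) \<Rightarrow> bool" where
  "interpolating_variety_A0 lam mu \<longleftrightarrow>
     (\<forall>a :: nat \<Rightarrow> nat \<Rightarrow> complex.
        (\<forall>\<epsilon>>0. \<exists>C. \<forall>n. (\<Sum>k<mu n. norm (a n k)) * exp (- \<epsilon> * norm (lam n)) \<le> C)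
        \<longrightarrow> (\<exists>F\<in>A0. \<forall>n k. k < mu n \<longrightarrow> (deriv ^^ k) F (lam n) / of_nat (fact k) = a n k))"

definition class_ABC :: "(nat \<Rightarrow> complex) \<Rightarrow> (nat \<Rightarrow> nat) \<Rightarrow> bool" where
  "class_ABC lam mu \<longleftrightarrow>
     multiplicity_seq lam mu \<and>
     summable (\<lambda>n. real (mu n) / norm (lam n)) \<and>
     (\<exists>\<theta><pi/2. \<forall>n. \<bar>Arg (lam n)\<bar> \<le> \<theta>) \<and>
     interpolating_variety_A0 lam mu"

definition Theta :: "real \<Rightarrow> real \<Rightarrow> complex set" where
  "Theta \<eta> \<beta> = (if \<eta> = 0 then {z. Re z < \<beta>}
     else {z. Re z < \<beta> \<and> \<bar>Im z\<bar> \<le> \<bar>Re (z - of_real \<beta>)\<bar> / tan \<eta>})"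

definition TD_partial :: "(nat \<Rightarrow> complex) \<Rightarrow> (nat \<Rightarrow> nat) \<Rightarrow> (nat \<Rightarrow> nat \<Rightarrow> complex)
      \<Rightarrow> nat \<Rightarrow> complex \<Rightarrow> complex" where
  "TD_partial lam mu c N z = (\<Sum>n<N. (\<Sum>k<mu n. c n k * z ^ k) * exp (lam n * z))"

definition in_Lp :: "real \<Rightarrow> real \<Rightarrow> real \<Rightarrow> (real \<Rightarrow> complex) \<Rightarrow> bool" where
  "in_Lp p \<gamma> \<beta> g \<longleftrightarrow>
     set_borel_measurable lborel {\<gamma><..<\<beta>} g \<and>
     set_integrable lborel {\<gamma><..<\<beta>} (\<lambda>x. norm (g x) powr p)"

definition in_closed_span_E :: "(nat \<Rightarrow> complex) \<Rightarrow> (nat \<Rightarrow> nat) \<Rightarrow> real \<Rightarrow> real \<Rightarrow> real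
      \<Rightarrow> (real \<Rightarrow> complex) \<Rightarrow> bool" where
  "in_closed_span_E lam mu p \<gamma> \<beta> g \<longleftrightarrow>
     (\<forall>\<epsilon>>0. \<exists>N (d :: nat \<Rightarrow> nat \<Rightarrow> complex).
        (LINT x:{\<gamma><..<\<beta>}|lborel.
            norm (g x - (\<Sum>n<N. \<Sum>k<mu n. d n k * of_real x ^ k * exp (lam n * of_real x))) powr p)
        < \<epsilon>)"

end

theory Submission
  imports Defs
begin


lemma shift_poly:
  fixes c :: "nat \<Rightarrow> complex"
  shows "\<exists>e. \<forall>z. (\<Sum>k<m. c k * (z - w)^k) = (\<Sum>k<m. e k * z^k)"
proof (induction m)
  case 0 then show ?case by simp
next
  case (Suc m)
  then obtain e where e: "\<And>z. (\<Sum>k<m. c k * (z - w)^k) = (\<Sum>k<m. e k * z^k)" by blast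
  define e' where "e' k = (if k < m then e k else 0) + c m * (of_nat (m choose k) * (-w)^(m-k))" for k
  have "(\<Sum>k<Suc m. c k * (z - w)^k) = (\<Sum>k<Suc m. e' k * z^k)" for z
  proof -
    have b: "(z - w)^m = (\<Sum>k<Suc m. of_nat (m choose k) * z^k * (-w)^(m-k))"
      using binomial_ring[of z "-w" m] by (simp add: atMost_atLeast0 lessThan_Suc_atMost)
    have s1: "(\<Sum>k<Suc m. (if k < m then e k else 0) * z^k) = (\<Sum>k<m. e k * z^k)"
      by simp
    have "(\<Sum>k<Suc m. e' k * z^k) = (\<Sum>k<Suc m. (if k < m then e k else 0) * z^k)
           + c m * (\<Sum>k<Suc m. of_nat (m choose k) * z^k * (-w)^(m-k))"
      unfolding e'_def by (simp add: algebra_simps sum.distrib sum_distrib_left)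
    also have "\<dots> = (\<Sum>k<m. e k * z^k) + c m * (z - w)^m" using s1 b by simp
    finally show ?thesis using e[of z] by simp
  qed
  then show ?case by blast
qed

lemma eta_bounds:
  assumes "class_ABC lam mu"
  shows "0 \<le> (SUP n. \<bar>Arg (lam n)\<bar>) \<and> (SUP n. \<bar>Arg (lam n)\<bar>) < pi/2"
proof -
  obtain \<theta> where th: "\<theta> < pi/2" "\<And>n. \<bar>Arg (lam n)\<bar> \<le> \<theta>"
    using assms unfolding class_ABC_def by blast
  have bdd: "bdd_above (range (\<lambda>n. \<bar>Arg (lam n)\<bar>))" using th by (intro bdd_aboveI[of _ \<theta>]) auto
  have "0 \<le> \<bar>Arg (lam 0)\<bar>" by simp
  also have "\<dots> \<le> (SUP n. \<bar>Arg (lam n)\<bar>)" by (rule cSUP_upper[OF _ bdd]) simp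
  finally have 1: "0 \<le> (SUP n. \<bar>Arg (lam n)\<bar>)" .
  have "(SUP n. \<bar>Arg (lam n)\<bar>) \<le> \<theta>" by (rule cSUP_least) (use th in auto)
  with th show ?thesis using 1 by linarith
qed

lemma real_in_Theta:
  assumes "0 \<le> \<eta>" "\<eta> < pi/2" "x < \<beta>"
  shows "complex_of_real x \<in> Theta \<eta> \<beta>"
proof (cases "\<eta> = 0")
  case True then show ?thesis using assms by (simp add: Theta_def)
next
  case False
  then have "0 < tan \<eta>" using assms by (intro tan_gt_zero) auto
  then show ?thesis using assms False by (simp add: Theta_def)
qed


lemma tail_small:
  fixes G :: "real \<Rightarrow> real"
  assumes G: "set_integrable lborel {\<gamma><..<\<beta>} G" and gb: "\<gamma> < \<beta>" and e: "e > 0"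
  shows "\<exists>a. \<gamma> < a \<and> a < \<beta> \<and> \<bar>LINT x:{a<..<\<beta>}|lborel. G x\<bar> < e"
proof -
  define a where "a n = \<beta> - (\<beta> - \<gamma>) / (real n + 2)" for n
  have a1: "\<gamma> < a n" "a n < \<beta>" for n
  proof -
    have "\<gamma> * real n \<le> \<beta> * real n" using gb by (intro mult_right_mono) auto
    then have "(\<beta> - \<gamma>) / (real n + 2) < \<beta> - \<gamma>" using gb by (simp add: field_simps)
    moreover have "0 < (\<beta> - \<gamma>) / (real n + 2)" using gb by simp
    ultimately show "\<gamma> < a n" "a n < \<beta>" unfolding a_def by linarith+
  qed
  have si: "set_integrable lborel {a n<..<\<beta>} G" for n
    by (rule set_integrable_subset[OF G]) (use a1[of n] in auto)
  define s where "s n x = indicator {a n<..<\<beta>} x *\<^sub>R G x" for n x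
  have lim: "(\<lambda>n. s n x) \<longlonglongrightarrow> 0" for x
  proof (cases "x < \<beta>")
    case True
    obtain N :: nat where N: "(\<beta> - \<gamma>) / (\<beta> - x) < real N" using reals_Archimedean2 by blast
    have "\<forall>n\<ge>N. s n x = 0"
    proof (intro allI impI)
      fix n assume "N \<le> n"
      then have "(\<beta> - \<gamma>) / (\<beta> - x) < real n + 2" using N by linarith
      then have "(\<beta> - \<gamma>) < (real n + 2) * (\<beta> - x)" using True by (simp add: field_simps)
      then have "(\<beta> - \<gamma>) / (real n + 2) < \<beta> - x" by (simp add: field_simps)
      then have "x \<le> a n" unfolding a_def by linarith
      then show "s n x = 0" unfolding s_def by simp
    qed
    then show ?thesis by (intro tendsto_eventually) (auto simp: eventually_sequentially)
  next
    case False then show ?thesis by (simp add: s_def)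
  qed
  have "(\<lambda>n. integral\<^sup>L lborel (s n)) \<longlonglongrightarrow> integral\<^sup>L lborel (\<lambda>x::real. 0::real)"
  proof (rule Bochner_Integration.integral_dominated_convergence[where s=s and f="\<lambda>x. 0" and w="\<lambda>x. norm (indicator {\<gamma><..<\<beta>} x *\<^sub>R G x)"])
    show "(\<lambda>x. 0::real) \<in> borel_measurable lborel" by simp
    show "s n \<in> borel_measurable lborel" for n
      using si[of n] unfolding s_def set_integrable_def by (rule borel_measurable_integrable)
    show "integrable lborel (\<lambda>x. norm (indicator {\<gamma><..<\<beta>} x *\<^sub>R G x))"
      using G unfolding set_integrable_def by (rule integrable_norm)
    show "AE x in lborel. (\<lambda>n. s n x) \<longlonglongrightarrow> 0" using lim by simp
    show "AE x in lborel. norm (s n x) \<le> norm (indicator {\<gamma><..<\<beta>} x *\<^sub>R G x)" for n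
      using a1[of n] by (auto simp: s_def indicator_def)
  qed
  then have "(\<lambda>n. integral\<^sup>L lborel (s n)) \<longlonglongrightarrow> 0" by simp
  then obtain N where "\<forall>n\<ge>N. norm (integral\<^sup>L lborel (s n)) < e"
    using e unfolding LIMSEQ_iff by (metis diff_zero)
  then have "\<bar>integral\<^sup>L lborel (s N)\<bar> < e" by simp
  moreover have "(LINT x:{a N<..<\<beta>}|lborel. G x) = integral\<^sup>L lborel (s N)"
    by (simp add: set_lebesgue_integral_def s_def[abs_def])
  ultimately have "\<bar>LINT x:{a N<..<\<beta>}|lborel. G x\<bar> < e" by simp
  then show ?thesis using a1 by blast
qed


lemma powr3:
  fixes u v w p :: real
  assumes "0 \<le> u" "0 \<le> v" "0 \<le> w" "0 \<le> p" "s \<le> u + v + w" "0 \<le> s"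
  shows "s powr p \<le> 3 powr p * (u powr p + v powr p + w powr p)"
proof -
  define m where "m = max u (max v w)"
  have "s \<le> 3 * m" using assms unfolding m_def by linarith
  then have "s powr p \<le> (3 * m) powr p" using assms by (intro powr_mono2) auto
  also have "\<dots> = 3 powr p * m powr p" using assms by (simp add: powr_mult m_def)
  also have "m powr p \<le> u powr p + v powr p + w powr p"
    unfolding m_def using assms by (auto simp: max_def)
  then have "3 powr p * m powr p \<le> 3 powr p * (u powr p + v powr p + w powr p)"
    by (intro mult_left_mono) auto
  finally show ?thesis .
qed

lemma measT:
  fixes d :: "nat \<Rightarrow> nat \<Rightarrow> complex"
  shows "(\<lambda>x::real. \<Sum>n<N. \<Sum>k<mu n. d n k * of_real x ^ k * exp (lam n * of_real x)) \<in> borel_measurable lborel"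
  unfolding measurable_lborel2 by (intro borel_measurable_continuous_onI continuous_intros)


theorem theorem1p3:
  fixes lam :: "nat \<Rightarrow> complex" and mu :: "nat \<Rightarrow> nat"
    and c :: "nat \<Rightarrow> nat \<Rightarrow> complex" and f :: "complex \<Rightarrow> complex"
    and \<gamma> \<beta> p :: real
  assumes ABC: "class_ABC lam mu"
    and gb: "\<gamma> < \<beta>"
    and conv: "\<forall>K. compact K \<and> K \<subseteq> Theta (SUP n. \<bar>Arg (lam n)\<bar>) \<beta> \<longrightarrow>
                 uniform_limit K (TD_partial lam mu c) f sequentially"
    and hol: "f holomorphic_on interior (Theta (SUP n. \<bar>Arg (lam n)\<bar>) \<beta>)"
    and p: "p \<ge> 1"
    and Lp: "in_Lp p \<gamma> \<beta> (\<lambda>x. f (of_real x))"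
  shows "in_closed_span_E lam mu p \<gamma> \<beta> (\<lambda>x. f (of_real x))"
  unfolding in_closed_span_E_def
proof (intro allI impI)
  fix \<epsilon> :: real assume \<epsilon>: "\<epsilon> > 0"
  define \<eta> where "\<eta> = (SUP n. \<bar>Arg (lam n)\<bar>)"
  have eta: "0 \<le> \<eta>" "\<eta> < pi/2" using eta_bounds[OF ABC] unfolding \<eta>_def by auto
  have inTh: "complex_of_real x \<in> Theta \<eta> \<beta>" if "x < \<beta>" for x
    using real_in_Theta[OF eta that] .
  have conv': "uniform_limit (complex_of_real ` {u..v}) (TD_partial lam mu c) f sequentially"
    if "v < \<beta>" for u v
  proof -
    have "compact (complex_of_real ` {u..v})"
      by (intro compact_continuous_image continuous_intros) auto
    moreover have "complex_of_real ` {u..v} \<subseteq> Theta \<eta> \<beta>" using inTh that by auto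
    ultimately show ?thesis using conv unfolding \<eta>_def by blast
  qed
  define g where "g x = f (complex_of_real x)" for x
  define G where "G x = norm (g x) powr p" for x
  define S where "S = {\<gamma><..<\<beta>}"
  have gmeas: "(\<lambda>x. indicator S x *\<^sub>R g x) \<in> borel_measurable lborel"
    using Lp unfolding in_Lp_def set_borel_measurable_def g_def S_def by simp
  have Gint: "set_integrable lborel S G"
    using Lp unfolding in_Lp_def G_def g_def S_def by simp
  have p0: "0 < p" using p by simp
  define C3 where "C3 = 3 powr p"
  have C3: "C3 \<ge> 1" unfolding C3_def using p by (intro ge_one_powr_ge_zero) auto
  define \<epsilon>0 where "\<epsilon>0 = \<epsilon> / (8 * C3)"
  have \<epsilon>0: "\<epsilon>0 > 0" using \<epsilon> C3 by (simp add: \<epsilon>0_def)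
  define \<epsilon>1 where "\<epsilon>1 = min (1/2) (\<epsilon> / (4 * (2 + C3) * (\<beta> - \<gamma>)))"
  have Dpos: "4 * (2 + C3) * (\<beta> - \<gamma>) > 0" using C3 gb by simp
  have \<epsilon>1: "\<epsilon>1 > 0" "\<epsilon>1 \<le> 1/2" "\<epsilon>1 * (4 * (2 + C3) * (\<beta> - \<gamma>)) \<le> \<epsilon>"
  proof -
    show "\<epsilon>1 > 0" unfolding \<epsilon>1_def using \<epsilon> Dpos by simp
    show "\<epsilon>1 \<le> 1/2" unfolding \<epsilon>1_def by (rule min.cobounded1)
    have "\<epsilon>1 \<le> \<epsilon> / (4 * (2 + C3) * (\<beta> - \<gamma>))" unfolding \<epsilon>1_def by simp
    then have "\<epsilon>1 * (4 * (2 + C3) * (\<beta> - \<gamma>)) \<le> \<epsilon> / (4 * (2 + C3) * (\<beta> - \<gamma>)) * (4 * (2 + C3) * (\<beta> - \<gamma>))"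
      using Dpos by (intro mult_right_mono) auto
    then show "\<epsilon>1 * (4 * (2 + C3) * (\<beta> - \<gamma>)) \<le> \<epsilon>" using Dpos nonzero_divide_eq_eq[of "4 * (2 + C3) * (\<beta> - \<gamma>)" \<epsilon>] by (metis order_less_irrefl)
  qed
  obtain a where a: "\<gamma> < a" "a < \<beta>" "\<bar>LINT x:{a<..<\<beta>}|lborel. G x\<bar> < \<epsilon>0"
    using tail_small[OF Gint[unfolded S_def] gb \<epsilon>0] by blast
  define b where "b = (a + \<beta>) / 2"
  have b: "a < b" "b < \<beta>" using a unfolding b_def by auto
  have "continuous_on (complex_of_real ` {\<gamma>-1..b}) f"
  proof (rule uniform_limit_theorem[OF _ conv'[OF b(2)]])
    show "\<forall>\<^sub>F n in sequentially. continuous_on (complex_of_real ` {\<gamma> - 1..b}) (TD_partial lam mu c n)"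
      unfolding TD_partial_def by (intro always_eventually allI continuous_intros)
  qed simp
  then have "continuous_on {\<gamma>-1..b} g"
    unfolding g_def by (rule continuous_on_compose2[where g=f and t="complex_of_real ` {\<gamma>-1..b}"]) (auto intro: continuous_intros)
  then have "uniformly_continuous_on {\<gamma>-1..b} g" by (intro compact_uniformly_continuous) auto
  then obtain du where du: "du > 0" "\<And>x x'. x \<in> {\<gamma>-1..b} \<Longrightarrow> x' \<in> {\<gamma>-1..b} \<Longrightarrow> dist x' x < du \<Longrightarrow> dist (g x') (g x) < \<epsilon>1"
    unfolding uniformly_continuous_on_def using \<epsilon>1(1) by metis
  define \<delta> where "\<delta> = min (du/2) (min (1/2) ((b - a)/2))"
  have \<delta>: "0 < \<delta>" "\<delta> < du" "\<delta> \<le> 1" "\<delta> < b - a" using du b unfolding \<delta>_def min_def by auto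
  have "\<forall>\<^sub>F n in sequentially. \<forall>z\<in>complex_of_real ` {\<gamma>-\<delta>..\<beta>-\<delta>}. dist (TD_partial lam mu c n z) (f z) < \<epsilon>1"
    by (rule uniform_limitD[OF conv' \<epsilon>1(1)]) (use \<delta> in simp)
  then obtain N where N: "\<And>x. x \<in> {\<gamma>-\<delta>..\<beta>-\<delta>} \<Longrightarrow> dist (TD_partial lam mu c N (complex_of_real x)) (g x) < \<epsilon>1"
    unfolding g_def eventually_sequentially by blast
  have "\<forall>n. \<exists>e. \<forall>z. (\<Sum>k<mu n. c n k * (z - complex_of_real \<delta>)^k) = (\<Sum>k<mu n. e k * z^k)"
    using shift_poly by blast
  then obtain e where e: "\<And>n z. (\<Sum>k<mu n. c n k * (z - complex_of_real \<delta>)^k) = (\<Sum>k<mu n. e n k * z^k)"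
    by metis
  define d where "d n k = e n k * exp (- (lam n * complex_of_real \<delta>))" for n k
  define T where "T x = (\<Sum>n<N. \<Sum>k<mu n. d n k * complex_of_real x ^ k * exp (lam n * complex_of_real x))" for x
  have Teq: "T x = TD_partial lam mu c N (complex_of_real (x - \<delta>))" for x
  proof -
    have "TD_partial lam mu c N (complex_of_real (x - \<delta>)) =
      (\<Sum>n<N. (\<Sum>k<mu n. e n k * complex_of_real x ^ k) * (exp (lam n * complex_of_real x) * exp (- (lam n * complex_of_real \<delta>))))"
      unfolding TD_partial_def of_real_diff e
      by (intro sum.cong refl arg_cong2[where f="(*)"]) (simp_all add: exp_add[symmetric] algebra_simps)
    also have "\<dots> = T x" unfolding T_def d_def
      by (intro sum.cong refl) (simp add: sum_distrib_left sum_distrib_right mult_ac)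
    finally show ?thesis by simp
  qed
  have G0: "G x \<ge> 0" for x unfolding G_def by simp
  define C where "C = (2*\<epsilon>1) powr p + C3 * \<epsilon>1 powr p"
  define I where "I = (\<lambda>x. indicator {a<..<\<beta>} x * G x)"
  define L where "L x = indicator S x * norm (g x - T x) powr p" for x
  define B where "B x = indicator S x * C + C3 * (I x + I (x - \<delta>))" for x
  have I0: "I x \<ge> 0" for x unfolding I_def using G0 by simp
  have C0: "C \<ge> 0" unfolding C_def using C3 by simp
  have pw: "L x \<le> B x" for x
  proof (cases "x \<in> S")
    case False
    then show ?thesis unfolding L_def B_def using I0[of x] I0[of "x-\<delta>"] C3 by simp
  next
    case True
    then have x: "\<gamma> < x" "x < \<beta>" unfolding S_def by auto
    have TN: "dist (T x) (g (x-\<delta>)) < \<epsilon>1"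
      using N[of "x - \<delta>"] x unfolding Teq by simp
    show ?thesis
    proof (cases "x \<le> b")
      case True
      have "dist (g (x-\<delta>)) (g x) < \<epsilon>1"
        using du(2)[of x "x-\<delta>"] x True \<delta> by (simp add: dist_real_def)
      then have "norm (g x - T x) \<le> 2 * \<epsilon>1" using TN
        by (smt (verit) dist_commute dist_norm dist_triangle)
      then have "norm (g x - T x) powr p \<le> (2*\<epsilon>1) powr p" using p by (intro powr_mono2) auto
      also have "\<dots> \<le> C" unfolding C_def using C3 \<epsilon>1 by simp
      finally have "norm (g x - T x) powr p \<le> C" .
      moreover have "C3 * (I x + I (x - \<delta>)) \<ge> 0" using I0[of x] I0[of "x-\<delta>"] C3 by simp
      ultimately show ?thesis unfolding L_def B_def using \<open>x \<in> S\<close> by simp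
    next
      case False
      then have Ix: "I x = G x" "I (x - \<delta>) = G (x - \<delta>)" unfolding I_def using x \<delta> b by auto
      have "norm (g x - T x) \<le> norm (g x) + norm (g (x-\<delta>)) + \<epsilon>1" using TN
        by (smt (verit) dist_norm norm_triangle_ineq4 norm_triangle_ineq2 dist_commute)
      then have "norm (g x - T x) powr p \<le> C3 * (G x + G (x-\<delta>) + \<epsilon>1 powr p)"
        unfolding C3_def G_def using p \<epsilon>1 by (intro powr3) auto
      also have "\<dots> \<le> C + C3 * (G x + G (x-\<delta>))" unfolding C_def by (simp add: algebra_simps)
      finally show ?thesis unfolding L_def B_def using \<open>x \<in> S\<close> Ix by simp
    qed
  qed
  have Iint: "integrable lborel I"
  proof -
    have "{a<..<\<beta>} \<subseteq> {\<gamma><..<\<beta>}" using a by auto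
    then show ?thesis
      using set_integrable_subset[OF Gint, of "{a<..<\<beta>}"] unfolding S_def I_def set_integrable_def
      by auto
  qed
  have Iint2: "integrable lborel (\<lambda>x. I (x - \<delta>))"
    using lborel_integrable_real_affine_iff[of 1 I "-\<delta>"] Iint by simp
  have I2eq: "(\<integral>x. I (x - \<delta>) \<partial>lborel) = integral\<^sup>L lborel I"
    using lborel_integral_real_affine[of 1 I "-\<delta>"] by simp
  have Sint: "integrable lborel (\<lambda>x. indicator S x * C)"
    unfolding S_def using gb by (simp add: integrable_indicator_iff emeasure_lborel_Ioo)
  have Sval: "(\<integral>x. indicator S x * C \<partial>lborel) = C * (\<beta> - \<gamma>)"
    unfolding S_def using gb by simp
  have Bint: "integrable lborel B"
    unfolding B_def using Sint Iint Iint2 by simp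
  have Bval: "integral\<^sup>L lborel B = C * (\<beta> - \<gamma>) + C3 * (2 * integral\<^sup>L lborel I)"
    unfolding B_def using Sint Iint Iint2 Sval I2eq by simp
  have Tmeas: "T \<in> borel_measurable lborel" unfolding T_def by (rule measT)
  have Leq: "L = (\<lambda>x. norm (indicator S x *\<^sub>R g x - indicator S x *\<^sub>R T x) powr p)"
    unfolding L_def by (auto simp: indicator_def fun_eq_iff)
  have Lmeas: "L \<in> borel_measurable lborel"
  proof -
    have m1: "(\<lambda>x. indicator S x *\<^sub>R T x) \<in> borel_measurable lborel"
      using Tmeas by (intro borel_measurable_scaleR borel_measurable_indicator) (auto simp: S_def)
    have "(\<lambda>x. indicator S x *\<^sub>R g x - indicator S x *\<^sub>R T x) \<in> borel_measurable lborel"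
      using gmeas m1 by (rule borel_measurable_diff)
    then have "(\<lambda>x. norm (indicator S x *\<^sub>R g x - indicator S x *\<^sub>R T x)) \<in> borel_measurable lborel"
      by measurable
    then show ?thesis unfolding Leq
      by (rule powr_real_measurable) simp
  qed
  have Lint: "integrable lborel L"
    by (rule Bochner_Integration.integrable_bound[OF Bint Lmeas]) (use pw in \<open>auto simp: L_def intro!: AE_I2 order_trans[OF _ abs_ge_self]\<close>)
  have "integral\<^sup>L lborel L \<le> integral\<^sup>L lborel B"
    by (rule Bochner_Integration.integral_mono[OF Lint Bint pw])
  moreover have "integral\<^sup>L lborel I < \<epsilon>0"
    using a(3) unfolding I_def set_lebesgue_integral_def by simp
  moreover have "C \<le> (2 + C3) * \<epsilon>1"
  proof -
    have "(2*\<epsilon>1) powr p \<le> 2*\<epsilon>1" using \<epsilon>1 p by (intro powr_le_one_le) auto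
    moreover have "\<epsilon>1 powr p \<le> \<epsilon>1" using \<epsilon>1 p by (intro powr_le_one_le) auto
    ultimately show ?thesis unfolding C_def using C3 by (simp add: algebra_simps) (smt (verit) mult_left_mono)
  qed
  ultimately have "integral\<^sup>L lborel L < \<epsilon>"
  proof -
    assume h: "integral\<^sup>L lborel L \<le> integral\<^sup>L lborel B" "integral\<^sup>L lborel I < \<epsilon>0" "C \<le> (2 + C3) * \<epsilon>1"
    have "C * (\<beta> - \<gamma>) \<le> (2 + C3) * \<epsilon>1 * (\<beta> - \<gamma>)" using h(3) gb by (intro mult_right_mono) auto
    also have "\<dots> \<le> \<epsilon> / 4" using \<epsilon>1(3) by (simp add: algebra_simps)
    finally have 1: "C * (\<beta> - \<gamma>) \<le> \<epsilon> / 4" .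
    have "C3 * (2 * integral\<^sup>L lborel I) \<le> C3 * (2 * \<epsilon>0)" using h(2) C3 by simp
    also have "\<dots> = \<epsilon> / 4" unfolding \<epsilon>0_def using C3 by simp
    finally show ?thesis using h(1) 1 Bval \<epsilon> by linarith
  qed
  moreover have "(LINT x:{\<gamma><..<\<beta>}|lborel. norm (f (complex_of_real x) - (\<Sum>n<N. \<Sum>k<mu n. d n k * complex_of_real x ^ k * exp (lam n * complex_of_real x))) powr p) = integral\<^sup>L lborel L"
    unfolding set_lebesgue_integral_def L_def S_def g_def T_def by simp
  ultimately show "\<exists>N d. (LINT x:{\<gamma><..<\<beta>}|lborel. norm (f (complex_of_real x) - (\<Sum>n<N. \<Sum>k<mu n. d n k * complex_of_real x ^ k * exp (lam n * complex_of_real x))) powr p) < \<epsilon>"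
    by (intro exI[of _ N] exI[of _ d]) simp
qed
end
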